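(* Let $X$ be a normal Hausdorff topological space, $\Phi$ a local semiflow on $X$, and $\mathscr{A}$ an attractor of $\Phi$. Suppose $\mathscr{A}$ has an admissible neighborhood $N_1$. Then any attractor $A$ of $\Phi$ in $\mathscr{A}$ (i.e. any attractor of the restricted global semiflow $\Phi|_{\mathscr{A}}$ on $\mathscr{A}$) is also an attractor of $\Phi$ in $X$.
   Context: Setting: $X$ is a normal Hausdorff topological space and $\Phi$ is a local semiflow on $X$ (a continuous map from an open set $\mathcal{D}_\Phi\subset\mathbb{R}^+\times X$ to $X$, with escape times $T_x\in(0,\infty]$, $\Phi(0)x=x$, and $\Phi(t+s)x=\Phi(t)\Phi(s)x$). A set $U$ is a neighborhood of $A$ if $\overline{A}\subset\operatorname{int}U$. A set $M$ attracts $B$ if $T_x=\infty$ for all $x\in B$ and for every neighborhood $V$ of $M$ there is $t_0>0$ with $\Phi(t)B\subset V$ for all $t>t_0$. A set is sequentially compact (s-compact) if every sequence in it has a subsequence converging to a point of the set. An attractor of $\Phi$ is a nonempty s-compact invariant set $\mathscr{A}$ for which there is a neighborhood $N$ of $\mathscr{A}$ such that $\mathscr{A}$ attracts $N$ and $\mathscr{A}$ is the maximal s-compact invariant set in $N$. Since $\mathscr{A}$ is invariant, the restriction $\Phi|_{\mathscr{A}}$ is a global semiflow on $\mathscr{A}$; a set $A\subset\mathscr{A}$ is called an attractor of $\Phi$ in $\mathscr{A}$ if it is an attractor of $\Phi|_{\mathscr{A}}$ (with $\mathscr{A}$ carrying the subspace topology). A set $M$ is admissible if for any sequences $x_n\in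 M$ and $t_n\to\infty$ with $\Phi([0,t_n])x_n\subset M$ for all $n$, the sequence $\Phi(t_n)x_n$ has a convergent subsequence. *)

theory Defs
  imports "HOL-Analysis.Analysis" "HOL-Library.Extended_Real"
begin

text \<open>A local semiflow on the topological space X, given by the map Phi (written
  Phi t x for Phi(t)x) and escape times T x in (0, infinity]. Its domain is
  D = {(t,x). x in X, 0 <= t < T x}.\<close>

definition sf_domain :: "'a topology \<Rightarrow> ('a \<Rightarrow> ereal) \<Rightarrow> (real \<times> 'a) set" where
  "sf_domain X T = {(t, x). x \<in> topspace X \<and> 0 \<le> t \<and> ereal t < T x}"

definition local_semiflow ::
  "'a topology \<Rightarrow> ('a \<Rightarrow> ereal) \<Rightarrow> (real \<Rightarrow> 'a \<Rightarrow> 'a) \<Rightarrow> bool" where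
  "local_semiflow X T Phi \<longleftrightarrow>
     (\<forall>x\<in>topspace X. 0 < T x) \<and>
     openin (prod_topology (top_of_set {0..}) X) (sf_domain X T) \<and>
     continuous_map (subtopology (prod_topology euclideanreal X) (sf_domain X T)) X
        (\<lambda>(t, x). Phi t x) \<and>
     (\<forall>x\<in>topspace X. Phi 0 x = x) \<and>
     (\<forall>x\<in>topspace X. \<forall>s t. 0 \<le> s \<and> 0 \<le> t \<and> ereal (t + s) < T x \<longrightarrow>
         ereal t < T (Phi s x) \<and> Phi (t + s) x = Phi t (Phi s x))"

definition sf_nbhd :: "'a topology \<Rightarrow> 'a set \<Rightarrow> 'a set \<Rightarrow> bool" where
  "sf_nbhd X A U \<longleftrightarrow> U \<subseteq> topspace X \<and> X closure_of A \<subseteq> X interior_of U"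

definition sf_scompact :: "'a topology \<Rightarrow> 'a set \<Rightarrow> bool" where
  "sf_scompact X M \<longleftrightarrow> M \<subseteq> topspace X \<and>
     (\<forall>x :: nat \<Rightarrow> 'a. (\<forall>n. x n \<in> M) \<longrightarrow>
        (\<exists>r y. strict_mono r \<and> y \<in> M \<and> limitin X (x \<circ> r) y sequentially))"

definition sf_invariant ::
  "'a topology \<Rightarrow> ('a \<Rightarrow> ereal) \<Rightarrow> (real \<Rightarrow> 'a \<Rightarrow> 'a) \<Rightarrow> 'a set \<Rightarrow> bool" where
  "sf_invariant X T Phi M \<longleftrightarrow> M \<subseteq> topspace X \<and> (\<forall>x\<in>M. T x = \<infinity>) \<and>
     (\<forall>t\<ge>0. Phi t ` M = M)"

definition sf_attracts ::
  "'a topology \<Rightarrow> ('a \<Rightarrow> ereal) \<Rightarrow> (real \<Rightarrow> 'a \<Rightarrow> 'a) \<Rightarrow> 'a set \<Rightarrow> 'a set \<Rightarrow> bool" where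
  "sf_attracts X T Phi M B \<longleftrightarrow> (\<forall>x\<in>B. T x = \<infinity>) \<and>
     (\<forall>V. sf_nbhd X M V \<longrightarrow> (\<exists>t0>0. \<forall>t>t0. Phi t ` B \<subseteq> V))"

definition sf_attractor ::
  "'a topology \<Rightarrow> ('a \<Rightarrow> ereal) \<Rightarrow> (real \<Rightarrow> 'a \<Rightarrow> 'a) \<Rightarrow> 'a set \<Rightarrow> bool" where
  "sf_attractor X T Phi A \<longleftrightarrow> A \<noteq> {} \<and> sf_scompact X A \<and> sf_invariant X T Phi A \<and>
     (\<exists>N. sf_nbhd X A N \<and> sf_attracts X T Phi A N \<and>
        (\<forall>M. sf_scompact X M \<and> sf_invariant X T Phi M \<and> M \<subseteq> N \<longrightarrow> M \<subseteq> A))"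

definition sf_admissible ::
  "'a topology \<Rightarrow> ('a \<Rightarrow> ereal) \<Rightarrow> (real \<Rightarrow> 'a \<Rightarrow> 'a) \<Rightarrow> 'a set \<Rightarrow> bool" where
  "sf_admissible X T Phi M \<longleftrightarrow>
     (\<forall>(x :: nat \<Rightarrow> 'a) (t :: nat \<Rightarrow> real).
        (\<forall>n. x n \<in> M) \<and> filterlim t at_top sequentially \<and>
        (\<forall>n. \<forall>s\<in>{0..t n}. ereal s < T (x n) \<and> Phi s (x n) \<in> M) \<longrightarrow>
        (\<exists>r y. strict_mono r \<and> y \<in> topspace X \<and>
           limitin X (\<lambda>n. Phi (t (r n)) (x (r n))) y sequentially))"

end

theory Submission
  imports Defs "HOL-Library.Diagonal_Subsequence"
begin

locale sfl =
  fixes X :: "'a topology" and T :: "'a \<Rightarrow> ereal" and P :: "real \<Rightarrow> 'a \<Rightarrow> 'a"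
  assumes haus: "Hausdorff_space X" and lsf: "local_semiflow X T P"
begin

lemma cont: "continuous_map (subtopology (prod_topology euclideanreal X) (sf_domain X T)) X
        (\<lambda>z. P (fst z) (snd z))"
  using lsf unfolding local_semiflow_def by (simp add: case_prod_beta')

lemma P0: "x \<in> topspace X \<Longrightarrow> P 0 x = x"
  using lsf unfolding local_semiflow_def by blast

lemma Ptop: assumes "x \<in> topspace X" "T x = \<infinity>" "0 \<le> s" shows "P s x \<in> topspace X"
proof -
  have "(s, x) \<in> topspace (subtopology (prod_topology euclideanreal X) (sf_domain X T))"
    using assms by (simp add: sf_domain_def)
  then show ?thesis using cont by (metis (no_types, lifting) continuous_map_def fst_conv snd_conv Pi_iff)
qed

lemma ereal_all_less: "(\<And>r::real. 0 \<le> r \<Longrightarrow> ereal r < z) \<Longrightarrow> z = \<infinity>"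
proof (cases z)
  case (real r)
  assume h: "\<And>r::real. 0 \<le> r \<Longrightarrow> ereal r < z"
  have "ereal (max 0 r) < ereal r" using h[of "max 0 r"] real by simp
  then show ?thesis by simp
next
  case MInf
  assume h: "\<And>r::real. 0 \<le> r \<Longrightarrow> ereal r < z"
  then show ?thesis using h[of 0] MInf by simp
qed simp

lemma semi:
  assumes "x \<in> topspace X" "T x = \<infinity>" "0 \<le> a" "0 \<le> b"
  shows "T (P b x) = \<infinity> \<and> P (a + b) x = P a (P b x)"
proof -
  have ax: "\<forall>s t. 0 \<le> s \<and> 0 \<le> t \<and> ereal (t + s) < T x \<longrightarrow>
         ereal t < T (P s x) \<and> P (t + s) x = P t (P s x)"
    using lsf assms unfolding local_semiflow_def by blast
  have "T (P b x) = \<infinity>"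
    by (rule ereal_all_less) (use ax assms in auto)
  moreover have "P (a + b) x = P a (P b x)" using ax assms by auto
  ultimately show ?thesis by blast
qed

lemma flow_lim:
  assumes y: "limitin X y l F" and s: "(s \<longlongrightarrow> s0) F" and s0: "0 \<le> s0" and Tl: "T l = \<infinity>"
    and ev: "eventually (\<lambda>n. 0 \<le> s n \<and> T (y n) = \<infinity> \<and> y n \<in> topspace X) F"
  shows "limitin X (\<lambda>n. P (s n) (y n)) (P s0 l) F"
proof -
  have l: "l \<in> topspace X" using y limitin_topspace by metis
  have "limitin (prod_topology euclideanreal X) (\<lambda>n. (s n, y n)) (s0, l) F"
    using y s by (simp add: limitin_pairwise o_def)
  moreover have "(s0, l) \<in> sf_domain X T" using l s0 Tl by (simp add: sf_domain_def)
  moreover have "eventually (\<lambda>n. (s n, y n) \<in> sf_domain X T) F"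
    using ev by (rule eventually_mono) (simp add: sf_domain_def)
  ultimately have "limitin (subtopology (prod_topology euclideanreal X) (sf_domain X T)) (\<lambda>n. (s n, y n)) (s0, l) F"
    by (simp add: limitin_subtopology)
  from continuous_map_limit[OF cont this] show ?thesis by (simp add: o_def)
qed

end

definition Inv :: "(real \<Rightarrow> 'a \<Rightarrow> 'a) \<Rightarrow> 'a set \<Rightarrow> 'a set" where
 "Inv P C = {z. \<exists>v. v 0 = z \<and> (\<forall>m. P 1 (v (Suc m)) = v m) \<and> (\<forall>m s. 0 \<le> s \<longrightarrow> P s (v m) \<in> C)}"

locale att = sfl +
  fixes N0 N1 K :: "'a set"
  assumes Kcl: "closedin X K" and KN0: "K \<subseteq> N0" and KN1: "K \<subseteq> N1"
    and TK: "\<forall>x\<in>K. T x = \<infinity>" and adm: "sf_admissible X T P N1"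
begin

lemma Ktop: "K \<subseteq> topspace X" using Kcl closedin_subset by blast

lemma Ksemi: assumes "x \<in> K" "0 \<le> a" "0 \<le> b"
  shows "T (P b x) = \<infinity> \<and> P (a + b) x = P a (P b x) \<and> P b x \<in> topspace X"
  using semi[of x a b] Ptop[of x b] assms TK Ktop by auto

lemma Lback:
  fixes x :: "nat \<Rightarrow> 'a" and t :: "nat \<Rightarrow> real"
  assumes xK: "\<forall>n. x n \<in> K" and fw: "\<forall>n s. 0 \<le> s \<longrightarrow> P s (x n) \<in> K"
    and t: "filterlim t at_top sequentially"
  shows "\<exists>r v. strict_mono r \<and> (\<forall>m. v m \<in> K) \<and> (\<forall>m. P 1 (v (Suc m)) = v m) \<and>
     (\<forall>m s. 0 \<le> s \<longrightarrow> limitin X (\<lambda>i. P (t (r i) - real m + s) (x (r i))) (P s (v m)) sequentially)"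
proof -
  define a where "a m n = P (max 0 (t n - real m)) (x n)" for m n
  have aK: "a m n \<in> K" for m n using fw unfolding a_def by simp
  have ex: "\<exists>r'. strict_mono r' \<and> (\<exists>y. limitin X (a m \<circ> (s \<circ> r')) y sequentially)"
    if s: "strict_mono s" for m and s :: "nat \<Rightarrow> nat"
  proof -
    have ts: "filterlim (t \<circ> s) at_top sequentially"
      using filterlim_compose[OF t filterlim_subseq[OF s]] by (simp add: o_def)
    have tl: "filterlim (\<lambda>n. max 0 (t (s n) - real m)) at_top sequentially"
      unfolding filterlim_at_top
    proof
      fix Z :: real
      have "eventually (\<lambda>n. Z + real m \<le> (t \<circ> s) n) sequentially"
        using ts unfolding filterlim_at_top by blast
      then show "eventually (\<lambda>n. Z \<le> max 0 (t (s n) - real m)) sequentially"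
        by (rule eventually_mono) auto
    qed
    have "\<exists>r y. strict_mono r \<and> y \<in> topspace X \<and>
           limitin X (\<lambda>n. P ((\<lambda>n. max 0 (t (s n) - real m)) (r n)) ((x \<circ> s) (r n))) y sequentially"
    proof (rule adm[unfolded sf_admissible_def, rule_format])
      show "(\<forall>n. (x \<circ> s) n \<in> N1) \<and> filterlim (\<lambda>n. max 0 (t (s n) - real m)) at_top sequentially \<and>
        (\<forall>n. \<forall>sa\<in>{0..max 0 (t (s n) - real m)}. ereal sa < T ((x \<circ> s) n) \<and> P sa ((x \<circ> s) n) \<in> N1)"
      proof (intro conjI allI ballI)
        show "(x \<circ> s) n \<in> N1" for n using xK KN1 by auto
        show "filterlim (\<lambda>n. max 0 (t (s n) - real m)) at_top sequentially" by (rule tl)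
        fix n sa assume "sa \<in> {0..max 0 (t (s n) - real m)}"
        then have "0 \<le> sa" by simp
        show "ereal sa < T ((x \<circ> s) n)" using TK xK by simp
        show "P sa ((x \<circ> s) n) \<in> N1" using fw KN1 \<open>0 \<le> sa\<close> by auto
      qed
    qed
    then obtain r y where "strict_mono r" "limitin X (\<lambda>n. P (max 0 (t (s (r n)) - real m)) (x (s (r n)))) y sequentially"
      by auto
    then show ?thesis unfolding a_def by (auto simp: o_def)
  qed
  interpret sq: subseqs "\<lambda>m s. \<exists>y. limitin X (a m \<circ> s) y sequentially"
    by unfold_locales (rule ex)
  have dh: "\<exists>y. limitin X (a m \<circ> (sq.diagseq \<circ> (+) (Suc m))) y sequentially" for m
  proof (rule sq.diagseq_holds)
    fix r s n assume "strict_mono (r::nat\<Rightarrow>nat)" "\<exists>y. limitin X (a n \<circ> s) y sequentially"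
    then show "\<exists>y. limitin X (a n \<circ> (s \<circ> r)) y sequentially"
      using limitin_subsequence by (metis o_assoc)
  qed
  have ex2: "\<exists>y. limitin X (\<lambda>i. a m (sq.diagseq i)) y sequentially" for m
  proof -
    obtain y where "limitin X (a m \<circ> (sq.diagseq \<circ> (+) (Suc m))) y sequentially"
      using dh by blast
    moreover have "(a m \<circ> (sq.diagseq \<circ> (+) (Suc m))) = (\<lambda>i. a m (sq.diagseq (i + Suc m)))"
      by (auto simp: fun_eq_iff add.commute)
    ultimately show ?thesis
      using limitin_sequentially_offset_rev[of X "\<lambda>i. a m (sq.diagseq i)" "Suc m"] by auto
  qed
  have vlim: "limitin X (\<lambda>i. a m (sq.diagseq i)) (v m) sequentially" 
    if "v = (\<lambda>m. SOME y. limitin X (\<lambda>i. a m (sq.diagseq i)) y sequentially)" for m v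
    unfolding that by (rule someI_ex[OF ex2[of m]])
  define v where "v = (\<lambda>m. SOME y. limitin X (\<lambda>i. a m (sq.diagseq i)) y sequentially)"
  define r where "r = sq.diagseq"
  have r: "strict_mono r" unfolding r_def by (rule sq.subseq_diagseq)
  have vl: "limitin X (\<lambda>i. a m (r i)) (v m) sequentially" for m using vlim[OF v_def] r_def by simp
  have vK: "v m \<in> K" for m
    by (rule limitin_closedin[OF vl[of m] Kcl]) (auto simp: aK)
  have tr: "filterlim (t \<circ> r) at_top sequentially"
      using filterlim_compose[OF t filterlim_subseq[OF r]] by (simp add: o_def)
  have L: "limitin X (\<lambda>i. P (t (r i) - real m + s) (x (r i))) (P s (v m)) sequentially"
    if s: "0 \<le> s" for m s
  proof -
    have lim1: "limitin X (\<lambda>i. P s (a m (r i))) (P s (v m)) sequentially"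
    proof (rule flow_lim[OF vl[of m]])
      show "((\<lambda>i. s) \<longlongrightarrow> s) sequentially" by simp
      show "0 \<le> s" by (rule s)
      show "T (v m) = \<infinity>" using vK TK by blast
      have ha: "0 \<le> s \<and> T (a m (r i)) = \<infinity> \<and> a m (r i) \<in> topspace X" for i
        using s aK[of m "r i"] TK Ktop by blast
      show "\<forall>\<^sub>F i in sequentially. 0 \<le> s \<and> T (a m (r i)) = \<infinity> \<and> a m (r i) \<in> topspace X"
        apply (rule always_eventually) using ha by blast
    qed
    have ev1: "eventually (\<lambda>i. P s (a m (r i)) = P (t (r i) - real m + s) (x (r i))) sequentially"
    proof -
      have "eventually (\<lambda>i. real m \<le> (t \<circ> r) i) sequentially"
        using tr unfolding filterlim_at_top by blast
      then show ?thesis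
      proof (rule eventually_mono)
        fix i assume "real m \<le> (t \<circ> r) i"
        then have "max 0 (t (r i) - real m) = t (r i) - real m" by auto
        then show "P s (a m (r i)) = P (t (r i) - real m + s) (x (r i))"
          unfolding a_def using Ksemi[of "x (r i)" s "t (r i) - real m"] xK s \<open>real m \<le> (t \<circ> r) i\<close>
          by (simp add: add.commute)
      qed
    qed
    show ?thesis by (rule limitin_transform_eventually[OF ev1 lim1])
  qed
  have "P 1 (v (Suc m)) = v m" for m
  proof -
    have "limitin X (\<lambda>i. P (t (r i) - real (Suc m) + 1) (x (r i))) (P 1 (v (Suc m))) sequentially"
      using L[of 1 "Suc m"] by simp
    moreover have "limitin X (\<lambda>i. P (t (r i) - real (Suc m) + 1) (x (r i))) (P 0 (v m)) sequentially"
      using L[of 0 m] by (simp add: algebra_simps)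
    ultimately have "P 1 (v (Suc m)) = P 0 (v m)"
      using limitin_Hausdorff_unique[OF _ _ trivial_limit_sequentially haus] by blast
    then show ?thesis using P0 vK Ktop by auto
  qed
  then show ?thesis using r vK L by (intro exI[of _ r] exI[of _ v]) simp
qed

lemma chain:
  assumes vK: "\<forall>m. v m \<in> K" and v1: "\<forall>m. P 1 (v (Suc m)) = v m"
  shows "P (real m) (v m) = v 0"
proof (induction m)
  case 0 then show ?case using P0 vK Ktop by auto
next
  case (Suc m)
  have "P (real (Suc m)) (v (Suc m)) = P (real m + 1) (v (Suc m))" by (simp add: add.commute)
  also have "\<dots> = P (real m) (P 1 (v (Suc m)))" using Ksemi[of "v (Suc m)" "real m" 1] vK by (simp add: add.commute)
  also have "\<dots> = v 0" using v1 Suc by simp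
  finally show ?case .
qed

lemma InvD:
  assumes "z \<in> Inv P C"
  obtains v where "v 0 = z" "\<forall>m. P 1 (v (Suc m)) = v m" "\<forall>m s. 0 \<le> s \<longrightarrow> P s (v m) \<in> C"
  using assms unfolding Inv_def by blast

lemma Inv_vC: assumes "\<forall>m. P 1 (v (Suc m)) = v m" "\<forall>m s. 0 \<le> s \<longrightarrow> P s (v m) \<in> C"
  shows "v m \<in> C"
  using assms by (metis zero_le_one)

lemma Inv_sub: "Inv P C \<subseteq> C"
proof
  fix z assume "z \<in> Inv P C"
  then obtain v where "v 0 = z" "\<forall>m. P 1 (v (Suc m)) = v m" "\<forall>m s. 0 \<le> s \<longrightarrow> P s (v m) \<in> C"
    by (rule InvD)
  then show "z \<in> C" using Inv_vC by metis
qed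

lemma Inv_mono: "C \<subseteq> C' \<Longrightarrow> Inv P C \<subseteq> Inv P C'"
  unfolding Inv_def by blast

lemma Inv_fw:
  assumes CK: "C \<subseteq> K" and z: "z \<in> Inv P C" and t: "0 \<le> t"
  shows "P t z \<in> Inv P C"
proof -
  obtain v where v0: "v 0 = z" and v1: "\<forall>m. P 1 (v (Suc m)) = v m"
    and vC: "\<forall>m s. 0 \<le> s \<longrightarrow> P s (v m) \<in> C"
    using z by (rule InvD)
  have vK: "v m \<in> K" for m using Inv_vC[OF v1 vC] CK by blast
  show ?thesis unfolding Inv_def
  proof (intro CollectI exI[of _ "\<lambda>m. P t (v m)"] conjI allI impI)
    show "P t (v 0) = P t z" using v0 by simp
    fix m
    have "P 1 (P t (v (Suc m))) = P (1 + t) (v (Suc m))" using Ksemi[of "v (Suc m)" 1 t] vK t by simp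
    also have "\<dots> = P (t + 1) (v (Suc m))" by (simp add: add.commute)
    also have "\<dots> = P t (P 1 (v (Suc m)))" using Ksemi[of "v (Suc m)" t 1] vK t by simp
    finally show "P 1 (P t (v (Suc m))) = P t (v m)" using v1 by simp
    fix s :: real assume s: "0 \<le> s"
    have "P s (P t (v m)) = P (s + t) (v m)" using Ksemi[of "v m" s t] vK t s by simp
    then show "P s (P t (v m)) \<in> C" using vC s t by simp
  qed
qed

lemma Inv_bw:
  assumes CK: "C \<subseteq> K" and z: "z \<in> Inv P C" and t: "0 \<le> t"
  shows "z \<in> P t ` Inv P C"
proof -
  obtain v where v0: "v 0 = z" and v1: "\<forall>m. P 1 (v (Suc m)) = v m"
    and vC: "\<forall>m s. 0 \<le> s \<longrightarrow> P s (v m) \<in> C"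
    using z by (rule InvD)
  have vK: "\<forall>m. v m \<in> K" using Inv_vC[OF v1 vC] CK by blast
  define k where "k = nat \<lceil>t\<rceil>"
  have kt: "t \<le> real k" unfolding k_def by linarith
  define y where "y = P (real k - t) (v k)"
  have "y \<in> Inv P C"
  proof -
    have "v k \<in> Inv P C" unfolding Inv_def
      by (intro CollectI exI[of _ "\<lambda>i. v (k + i)"]) (use v1 vC in auto)
    then show ?thesis unfolding y_def using Inv_fw[OF CK] kt by simp
  qed
  moreover have "P t y = z"
  proof -
    have "P t y = P (t + (real k - t)) (v k)" unfolding y_def
      using Ksemi[of "v k" t "real k - t"] vK t kt by simp
    also have "\<dots> = v 0" using chain[OF vK v1, of k] by simp
    finally show ?thesis using v0 by simp
  qed
  ultimately show ?thesis by blast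
qed

lemma Lback_Inv:
  assumes v1: "\<forall>m. P 1 (v (Suc m)) = v m" and Ccl: "closedin X C"
    and L: "\<forall>m s. 0 \<le> s \<longrightarrow> limitin X (\<lambda>i. f m s i) (P s (v m)) sequentially"
    and ev: "\<forall>m s. 0 \<le> s \<longrightarrow> eventually (\<lambda>i. f m s i \<in> C) sequentially"
  shows "v m \<in> Inv P C"
proof -
  have "P s (v m) \<in> C" if "0 \<le> s" for m s
    using limitin_closedin[OF L[rule_format, OF that] Ccl ev[rule_format, OF that]] by simp
  then show ?thesis unfolding Inv_def
    by (intro CollectI exI[of _ "\<lambda>i. v (m + i)"]) (use v1 in auto)
qed

lemma Inv_K_invariant: "sf_invariant X T P (Inv P K)"
  unfolding sf_invariant_def
proof (intro conjI allI impI ballI)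
  show "Inv P K \<subseteq> topspace X" using Inv_sub Ktop by blast
  show "T x = \<infinity>" if "x \<in> Inv P K" for x using that Inv_sub TK by blast
  fix t :: real assume t: "0 \<le> t"
  show "P t ` Inv P K = Inv P K"
    using Inv_fw[OF order_refl _ t] Inv_bw[OF order_refl _ t] by blast
qed

lemma Inv_K_scompact: "sf_scompact X (Inv P K)"
  unfolding sf_scompact_def
proof (intro conjI allI impI)
  show "Inv P K \<subseteq> topspace X" using Inv_sub Ktop by blast
  fix z :: "nat \<Rightarrow> 'a" assume z: "\<forall>n. z n \<in> Inv P K"
  have "\<forall>n. \<exists>v. v 0 = z n \<and> (\<forall>m. P 1 (v (Suc m)) = v m) \<and> (\<forall>m s. 0 \<le> s \<longrightarrow> P s (v m) \<in> K)"
    using z unfolding Inv_def by blast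
  then obtain V where V0: "\<And>n. V n 0 = z n" and V1: "\<And>n. \<forall>m. P 1 (V n (Suc m)) = V n m"
    and VK: "\<And>n. \<forall>m s. 0 \<le> s \<longrightarrow> P s (V n m) \<in> K"
    by metis
  have VKK: "\<And>n. \<forall>m. V n m \<in> K" using Inv_vC V1 VK by blast
  have tt: "filterlim (\<lambda>n. real n) at_top sequentially" by (rule filterlim_real_sequentially)
  obtain r w where r: "strict_mono r" and wK: "\<forall>m. w m \<in> K" and w1: "\<forall>m. P 1 (w (Suc m)) = w m"
    and L: "\<forall>m s. 0 \<le> s \<longrightarrow> limitin X (\<lambda>i. P (real (r i) - real m + s) (V (r i) (r i))) (P s (w m)) sequentially"
    using Lback[of "\<lambda>n. V n n" "\<lambda>n. real n"] VKK VK tt by blast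
  have ev: "\<forall>m s. 0 \<le> s \<longrightarrow> eventually (\<lambda>i. P (real (r i) - real m + s) (V (r i) (r i)) \<in> K) sequentially"
  proof (intro allI impI)
    fix m and s :: real assume s: "0 \<le> s"
    have "eventually (\<lambda>i. m \<le> r i) sequentially"
      using eventually_ge_at_top[of m] r seq_suble eventually_mono le_trans by (metis (no_types, lifting))
    then show "eventually (\<lambda>i. P (real (r i) - real m + s) (V (r i) (r i)) \<in> K) sequentially"
      by (rule eventually_mono) (use VK s in auto)
  qed
  have w0: "w 0 \<in> Inv P K"
    by (rule Lback_Inv[OF w1 Kcl L ev])
  have "limitin X (\<lambda>i. P (real (r i) - real 0 + 0) (V (r i) (r i))) (P 0 (w 0)) sequentially"
    using L by blast
  moreover have "P 0 (w 0) = w 0" using P0 wK Ktop by blast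
  moreover have "P (real (r i) - real 0 + 0) (V (r i) (r i)) = z (r i)" for i
    using chain[of "V (r i)" "r i"] VKK V1 V0 by simp
  ultimately have "limitin X (z \<circ> r) (w 0) sequentially" by (simp add: o_def)
  then show "\<exists>r y. strict_mono r \<and> y \<in> Inv P K \<and> limitin X (z \<circ> r) y sequentially"
    using r w0 by blast
qed

end

lemma relnbhd:
  assumes "openin X G" "X closure_of A \<subseteq> G" "A \<subseteq> AA"
  shows "sf_nbhd (subtopology X AA) A (G \<inter> AA)"
proof -
  have op: "openin (subtopology X AA) (G \<inter> AA)" using assms(1) openin_subtopology by blast
  have "(subtopology X AA) closure_of A = AA \<inter> X closure_of A"
    using closure_of_subtopology[of X AA A] assms(3) by (simp add: Int_absorb1)
  moreover have "G \<subseteq> topspace X" using assms(1) by (rule openin_subset)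
  moreover have "(subtopology X AA) interior_of (G \<inter> AA) = G \<inter> AA" using op by (rule interior_of_openin)
  ultimately show ?thesis unfolding sf_nbhd_def using assms(2) by auto
qed

locale mainloc = att +
  fixes AA A NA V :: "'a set" and tau :: real
  assumes normal: "normal_space X"
    and AAinv: "sf_invariant X T P AA"
    and AAmax: "\<forall>M. sf_scompact X M \<and> sf_invariant X T P M \<and> M \<subseteq> N0 \<longrightarrow> M \<subseteq> AA"
    and N0att: "sf_attracts X T P AA N0"
    and N0top: "N0 \<subseteq> topspace X"
    and Vopen: "openin X V" and clAAV: "X closure_of AA \<subseteq> V"
    and Kdef: "K = X closure_of V" and Kint: "K \<subseteq> X interior_of N0"
    and tau: "0 < tau" "\<forall>t>tau. P t ` N0 \<subseteq> V"
    and AsubAA: "A \<subseteq> AA" and Ainv: "sf_invariant (subtopology X AA) T P A"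
    and Ascomp: "sf_scompact (subtopology X AA) A"
    and NAnb: "sf_nbhd (subtopology X AA) A NA"
    and NAatt: "sf_attracts (subtopology X AA) T P A NA"
    and NAmax: "\<forall>M. sf_scompact (subtopology X AA) M \<and> sf_invariant (subtopology X AA) T P M \<and> M \<subseteq> NA \<longrightarrow> M \<subseteq> A"
begin

lemma AAtop: "AA \<subseteq> topspace X" using AAinv unfolding sf_invariant_def by blast

lemma VK: "V \<subseteq> K"
  using Kdef closure_of_subset[OF openin_subset[OF Vopen]] by simp

lemma AAK: "AA \<subseteq> K"
  using closure_of_subset[OF AAtop] clAAV VK by blast

lemma AAfw: "y \<in> AA \<Longrightarrow> 0 \<le> s \<Longrightarrow> P s y \<in> AA"
  using AAinv unfolding sf_invariant_def by blast

lemma TN0: "x \<in> N0 \<Longrightarrow> T x = \<infinity>" using N0att unfolding sf_attracts_def by blast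

lemma N0semi: assumes "x \<in> N0" "0 \<le> a" "0 \<le> b"
  shows "T (P b x) = \<infinity> \<and> P (a + b) x = P a (P b x) \<and> P b x \<in> topspace X"
  using semi[of x a b] Ptop[of x b] assms TN0 N0top by auto

lemma N0fw: assumes "x \<in> N0" "0 \<le> s" shows "P (s + (tau + 1)) x \<in> K" "P s (P (tau + 1) x) \<in> K"
proof -
  have "s + (tau + 1) > tau" using assms by simp
  then have "P (s + (tau + 1)) x \<in> V" using tau(2) assms(1) by blast
  then show "P (s + (tau + 1)) x \<in> K" using VK by blast
  then show "P s (P (tau + 1) x) \<in> K" using N0semi[of x s "tau + 1"] assms tau by simp
qed

lemma InvK_AA: "Inv P K \<subseteq> AA"
  using AAmax Inv_K_scompact Inv_K_invariant Inv_sub KN0 by blast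

lemma contK: "continuous_map (subtopology X K) X (P s)" if "0 \<le> s"
proof -
  have "continuous_map (subtopology X K) (subtopology (prod_topology euclideanreal X) (sf_domain X T)) (\<lambda>x. (s, x))"
  proof (rule continuous_map_into_subtopology)
    show "continuous_map (subtopology X K) (prod_topology euclideanreal X) (\<lambda>x. (s, x))"
      by (simp add: continuous_map_paired continuous_map_from_subtopology)
    show "(\<lambda>x. (s, x)) \<in> topspace (subtopology X K) \<rightarrow> sf_domain X T"
      using TK that by (auto simp: sf_domain_def)
  qed
  from continuous_map_compose[OF this cont] show ?thesis by (simp add: o_def)
qed

lemma clos_fw:
  assumes St: "S \<subseteq> topspace X" and cl: "X closure_of S \<subseteq> K" and fw: "\<forall>s\<ge>0. P s ` S \<subseteq> S" and s: "0 \<le> s"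
  shows "P s ` (X closure_of S) \<subseteq> X closure_of S"
proof -
  have "(subtopology X K) closure_of S = X closure_of S"
    using closure_of_subtopology[of X K S] cl closure_of_subset[OF St] by (simp add: Int_absorb1 Int_absorb2)
  then have "P s ` (X closure_of S) \<subseteq> X closure_of (P s ` S)"
    using continuous_map_image_closure_subset[OF contK[OF s], of S] by simp
  also have "\<dots> \<subseteq> X closure_of S" using fw s closure_of_mono by blast
  finally show ?thesis .
qed

lemma ev_r: "strict_mono r \<Longrightarrow> eventually (\<lambda>i. c \<le> real (r i)) sequentially"
proof -
  assume r: "strict_mono r"
  have "filterlim (\<lambda>i. real (r i)) at_top sequentially"
    using filterlim_compose[OF filterlim_real_sequentially filterlim_subseq[OF r]] by (simp add: o_def)
  then show ?thesis unfolding filterlim_at_top by blast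
qed

definition "Up = (subtopology X AA) interior_of NA"
definition "O1 = (SOME G. openin X G \<and> Up = G \<inter> AA)"
definition "F = topspace X - O1"
definition "R = Inv P (K \<inter> F)"

lemma O1: "openin X O1" "Up = O1 \<inter> AA"
proof -
  have "\<exists>G. openin X G \<and> Up = G \<inter> AA"
    unfolding Up_def using openin_interior_of openin_subtopology by blast
  then have "openin X O1 \<and> Up = O1 \<inter> AA" unfolding O1_def by (rule someI_ex)
  then show "openin X O1" "Up = O1 \<inter> AA" by auto
qed

lemma Fcl: "closedin X F" unfolding F_def using O1(1) by blast

lemma UpNA: "Up \<subseteq> NA" unfolding Up_def by (rule interior_of_subset)

lemma Atop: "A \<subseteq> topspace X" using AsubAA AAtop by blast

lemma Afw: "0 \<le> s \<Longrightarrow> P s ` A = A"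
  using Ainv unfolding sf_invariant_def by blast

lemma clA_Up: "AA \<inter> X closure_of A \<subseteq> Up"
proof -
  have "(subtopology X AA) closure_of A = AA \<inter> X closure_of A"
    using closure_of_subtopology[of X AA A] AsubAA by (simp add: Int_absorb1)
  then show ?thesis using NAnb unfolding sf_nbhd_def Up_def by simp
qed

lemma clA_K: "X closure_of A \<subseteq> K"
  using closure_of_mono[OF AsubAA] clAAV VK by blast

lemma clA_I0: "X closure_of A \<subseteq> X interior_of N0" using clA_K Kint by blast

lemma RKF: "R \<subseteq> K \<inter> F" unfolding R_def by (rule Inv_sub)

lemma clR: "X closure_of R \<subseteq> K \<inter> F"
  using closure_of_minimal[OF RKF] Kcl Fcl by blast

lemma Rfw: "0 \<le> s \<Longrightarrow> P s ` R \<subseteq> R"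
  unfolding R_def using Inv_fw[of "K \<inter> F"] by blast

lemma disj_AR: "disjnt (X closure_of A) (X closure_of R)"
proof (rule ccontr)
  assume "\<not> ?thesis"
  then obtain p where pA: "p \<in> X closure_of A" and pR: "p \<in> X closure_of R"
    unfolding disjnt_def by blast
  have fA: "P s p \<in> X closure_of A" if "0 \<le> s" for s
    using clos_fw[OF Atop clA_K _ that] Afw pA by blast
  have fR: "P s p \<in> X closure_of R" if "0 \<le> s" for s
  proof -
    have "R \<subseteq> topspace X" using RKF Ktop by blast
    then show ?thesis using clos_fw[OF _ _ _ that, of R] clR Rfw pR by blast
  qed
  have pK: "p \<in> K" using pA clA_K by blast
  obtain r v where r: "strict_mono r" and vK: "\<forall>m. v m \<in> K" and v1: "\<forall>m. P 1 (v (Suc m)) = v m"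
    and L: "\<forall>m s. 0 \<le> s \<longrightarrow> limitin X (\<lambda>i. P (real (r i) - real m + s) p) (P s (v m)) sequentially"
    using Lback[of "\<lambda>n. p" "\<lambda>n. real n"] pK fA clA_K filterlim_real_sequentially by blast
  have ev: "\<forall>m s. 0 \<le> s \<longrightarrow> eventually (\<lambda>i. P (real (r i) - real m + s) p \<in> C) sequentially"
    if "\<And>s. 0 \<le> s \<Longrightarrow> P s p \<in> C" for C
  proof (intro allI impI)
    fix m and s :: real assume "0 \<le> s"
    show "eventually (\<lambda>i. P (real (r i) - real m + s) p \<in> C) sequentially"
      using ev_r[OF r, of "real m"] by (rule eventually_mono) (use that \<open>0 \<le> s\<close> in auto)
  qed
  have "v 0 \<in> Inv P K" by (rule Lback_Inv[OF v1 Kcl L ev]) (use fA clA_K in blast)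
  then have v0AA: "v 0 \<in> AA" using InvK_AA by blast
  have "v 0 \<in> Inv P (X closure_of A \<inter> X closure_of R)"
    by (rule Lback_Inv[OF v1 _ L ev]) (use fA fR in auto)
  then have "v 0 \<in> X closure_of A \<inter> X closure_of R" using Inv_sub by blast
  then show False using v0AA clA_Up O1 clR unfolding F_def by blast
qed

definition "W = (SOME U. openin X U \<and> X closure_of A \<subseteq> U \<and> disjnt (X closure_of R) (X closure_of U))"

lemma W: "openin X W" "X closure_of A \<subseteq> W" "disjnt R (X closure_of W)"
proof -
  have "\<exists>U. openin X U \<and> X closure_of A \<subseteq> U \<and> disjnt (X closure_of R) (X closure_of U)"
    using normal[unfolded normal_space] disj_AR by simp
  then have *: "openin X W \<and> X closure_of A \<subseteq> W \<and> disjnt (X closure_of R) (X closure_of W)"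
    unfolding W_def by (rule someI_ex)
  then show "openin X W" "X closure_of A \<subseteq> W" by auto
  have "R \<subseteq> X closure_of R" using closure_of_subset RKF Ktop by (metis le_infE subset_trans)
  then show "disjnt R (X closure_of W)" using * disjnt_subset1 by blast
qed

lemma dich:
  assumes CW: "closedin X CW" "disjnt CW R" and vAA: "\<forall>m. v m \<in> AA"
    and v1: "\<forall>m. P 1 (v (Suc m)) = v m"
    and vW: "\<forall>a b. 0 \<le> a \<and> a < real b \<longrightarrow> P a (v b) \<in> CW"
    and V0: "sf_nbhd (subtopology X AA) A V0"
  shows "v 0 \<in> V0"
proof -
  obtain t0 where t0: "t0 > 0" "\<forall>t>t0. P t ` NA \<subseteq> V0"
    using NAatt V0 unfolding sf_attracts_def by blast
  have vK: "\<forall>m. v m \<in> K" using vAA AAK by blast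
  show ?thesis
  proof (cases "\<exists>a b. 0 \<le> a \<and> a + t0 + 1 \<le> real b \<and> P a (v b) \<in> Up")
    case True
    then obtain a b where ab: "0 \<le> a" "a + t0 + 1 \<le> real b" "P a (v b) \<in> Up" by blast
    have "v 0 = P (real b) (v b)" using chain[OF vK v1] by simp
    also have "\<dots> = P ((real b - a) + a) (v b)" by simp
    also have "\<dots> = P (real b - a) (P a (v b))" using Ksemi[of "v b" "real b - a" a] vK ab t0(1) by simp
    finally have "v 0 = P (real b - a) (P a (v b))" .
    moreover have "real b - a > t0" using ab by simp
    ultimately show ?thesis using t0(2) ab(3) UpNA by blast
  next
    case False
    have xK: "\<forall>k. v (2 * k) \<in> K" using vK by blast
    have fw: "\<forall>k s. 0 \<le> s \<longrightarrow> P s (v (2 * k)) \<in> K" using AAfw vAA AAK by blast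
    obtain r w where r: "strict_mono r" and w1: "\<forall>m. P 1 (w (Suc m)) = w m"
      and L: "\<forall>m s. 0 \<le> s \<longrightarrow> limitin X (\<lambda>i. P (real (r i) - real m + s) (v (2 * r i))) (P s (w m)) sequentially"
      using Lback[OF xK fw filterlim_real_sequentially] by blast
    define C where "C = K \<inter> F \<inter> CW"
    have Ccl: "closedin X C" unfolding C_def using Kcl Fcl CW(1) by blast
    have ev: "\<forall>m s. 0 \<le> s \<longrightarrow> eventually (\<lambda>i. P (real (r i) - real m + s) (v (2 * r i)) \<in> C) sequentially"
    proof (intro allI impI)
      fix m and s :: real assume s: "0 \<le> s"
      show "eventually (\<lambda>i. P (real (r i) - real m + s) (v (2 * r i)) \<in> C) sequentially"
        using ev_r[OF r, of "real m + s + t0 + 1"]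
      proof (rule eventually_mono)
        fix i assume i: "real m + s + t0 + 1 \<le> real (r i)"
        define a where "a = real (r i) - real m + s"
        have a0: "0 \<le> a" "a + t0 + 1 \<le> real (2 * r i)" "a < real (2 * r i)"
          using i s t0(1) unfolding a_def by auto
        have inAA: "P a (v (2 * r i)) \<in> AA" using AAfw vAA a0 by blast
        moreover have "P a (v (2 * r i)) \<notin> Up" using False a0 by blast
        ultimately have "P a (v (2 * r i)) \<in> F" using O1(2) AAtop unfolding F_def by blast
        moreover have "P a (v (2 * r i)) \<in> CW" using vW a0 by blast
        ultimately show "P (real (r i) - real m + s) (v (2 * r i)) \<in> C"
          using inAA AAK unfolding C_def a_def by blast
      qed
    qed
    have "w 0 \<in> Inv P C" by (rule Lback_Inv[OF w1 Ccl L ev])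
    then have "w 0 \<in> R \<and> w 0 \<in> CW"
      using Inv_mono[of C "K \<inter> F"] Inv_sub[of C] unfolding R_def C_def by blast
    then show ?thesis using CW(2) unfolding disjnt_def by blast
  qed
qed

lemma limtraj:
  assumes xN0: "\<forall>n. x n \<in> N0" and e: "\<forall>n. real n + tau + 1 \<le> e n"
    and inW: "\<forall>n s. 0 \<le> s \<and> s < e n \<longrightarrow> P s (x n) \<in> W"
    and B: "closedin X B" and eB: "\<forall>n. P (e n) (x n) \<in> B"
  shows "\<exists>v. (\<forall>m. v m \<in> AA) \<and> (\<forall>m. P 1 (v (Suc m)) = v m) \<and>
    (\<forall>a b. 0 \<le> a \<and> a < real b \<longrightarrow> P a (v b) \<in> X closure_of W) \<and> v 0 \<in> B"
proof -
  define x' where "x' n = P (tau + 1) (x n)" for n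
  define t' where "t' n = e n - (tau + 1)" for n
  have x'K: "\<forall>n. x' n \<in> K" unfolding x'_def using N0fw(1)[of _ 0] xN0 by simp
  have fw: "\<forall>n s. 0 \<le> s \<longrightarrow> P s (x' n) \<in> K" unfolding x'_def using N0fw(2) xN0 by blast
  have tge: "real n \<le> t' n" for n using e unfolding t'_def by (simp add: algebra_simps)
  have t': "filterlim t' at_top sequentially"
    by (rule filterlim_at_top_mono[OF filterlim_real_sequentially]) (use tge in auto)
  obtain r v where r: "strict_mono r" and vK: "\<forall>m. v m \<in> K" and v1: "\<forall>m. P 1 (v (Suc m)) = v m"
    and L: "\<forall>m s. 0 \<le> s \<longrightarrow> limitin X (\<lambda>i. P (t' (r i) - real m + s) (x' (r i))) (P s (v m)) sequentially"
    using Lback[OF x'K fw t'] by blast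
  have eq: "P (t' n - real m + s) (x' n) = P (e n - real m + s) (x n)" if "real m \<le> real n" "0 \<le> s" for n m s
  proof -
    have c: "0 \<le> t' n - real m + s" using tge[of n] that by simp
    have "P (t' n - real m + s) (x' n) = P ((t' n - real m + s) + (tau + 1)) (x n)"
      unfolding x'_def using N0semi[of "x n" "t' n - real m + s" "tau + 1"] xN0 c tau(1) by simp
    then show ?thesis unfolding t'_def by (simp add: algebra_simps)
  qed
  have evm: "eventually (\<lambda>i. real m \<le> real (r i)) sequentially" for m using ev_r[OF r] .
  have "v m \<in> Inv P K" for m
  proof (rule Lback_Inv[OF v1 Kcl L])
    show "\<forall>m s. 0 \<le> s \<longrightarrow> eventually (\<lambda>i. P (t' (r i) - real m + s) (x' (r i)) \<in> K) sequentially"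
    proof (intro allI impI)
      fix m and s :: real assume s: "0 \<le> s"
      show "eventually (\<lambda>i. P (t' (r i) - real m + s) (x' (r i)) \<in> K) sequentially"
        using evm[of m]
      proof (rule eventually_mono)
        fix i assume "real m \<le> real (r i)"
        then have "0 \<le> t' (r i) - real m + s" using tge[of "r i"] s by linarith
        then show "P (t' (r i) - real m + s) (x' (r i)) \<in> K" using fw by blast
      qed
    qed
  qed
  then have vAA: "\<forall>m. v m \<in> AA" using InvK_AA by blast
  have vW: "P a (v b) \<in> X closure_of W" if ab: "0 \<le> a" "a < real b" for a b
  proof (rule limitin_closedin[OF L[rule_format, OF ab(1), of b]])
    show "closedin X (X closure_of W)" by simp
    show "\<not> trivial_limit sequentially" by simp
    show "eventually (\<lambda>i. P (t' (r i) - real b + a) (x' (r i)) \<in> X closure_of W) sequentially"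
      using evm[of b]
    proof (rule eventually_mono)
      fix i assume i: "real b \<le> real (r i)"
      have "real (r i) + tau + 1 \<le> e (r i)" using e by blast
      then have "0 \<le> e (r i) - real b + a \<and> e (r i) - real b + a < e (r i)" using i ab tau(1) by linarith
      then have "P (e (r i) - real b + a) (x (r i)) \<in> W"
        using inW[THEN spec[of _ "r i"], THEN spec[of _ "e (r i) - real b + a"]] by blast
      then show "P (t' (r i) - real b + a) (x' (r i)) \<in> X closure_of W"
        using eq[OF i ab(1)] closure_of_subset[OF openin_subset[OF W(1)]] by auto
    qed
  qed
  have evB: "eventually (\<lambda>i. P (t' (r i) - real 0 + 0) (x' (r i)) \<in> B) sequentially"
  proof (rule always_eventually, rule allI)
    fix i
    have "P (t' (r i) - real 0 + 0) (x' (r i)) = P (e (r i) - real 0 + 0) (x (r i))"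
      by (rule eq) auto
    then show "P (t' (r i) - real 0 + 0) (x' (r i)) \<in> B" using eB by simp
  qed
  have L00: "limitin X (\<lambda>i. P (t' (r i) - real 0 + 0) (x' (r i))) (P 0 (v 0)) sequentially"
    using L by blast
  have "P 0 (v 0) \<in> B" using limitin_closedin[OF L00 B evB] by simp
  moreover have "P 0 (v 0) = v 0" using P0[of "v 0"] vK Ktop by blast
  ultimately have "v 0 \<in> B" by simp
  then show ?thesis using vAA v1 vW by blast
qed

lemma stab: "\<exists>S::nat. \<forall>x\<in>N0. (\<forall>s\<in>{0..real S}. P s x \<in> W) \<longrightarrow> (\<forall>s\<ge>0. P s x \<in> W)"
proof (rule ccontr)
  assume neg: "\<not> ?thesis"
  have ex: "\<exists>y. y \<in> N0 \<and> (\<forall>s\<in>{0..real S}. P s y \<in> W) \<and> (\<exists>s\<ge>0. P s y \<notin> W)" for S :: nat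
  proof -
    from neg have "\<not> (\<forall>x\<in>N0. (\<forall>s\<in>{0..real S}. P s x \<in> W) \<longrightarrow> (\<forall>s\<ge>0. P s x \<in> W))" by blast
    then show ?thesis by blast
  qed
  have "\<forall>n. \<exists>y. y \<in> N0 \<and> (\<forall>s\<in>{0..real (n + nat \<lceil>tau\<rceil> + 2)}. P s y \<in> W) \<and> (\<exists>s\<ge>0. P s y \<notin> W)"
    using ex by blast
  from choice[OF this] obtain x where "\<forall>n. x n \<in> N0 \<and> (\<forall>s\<in>{0..real (n + nat \<lceil>tau\<rceil> + 2)}. P s (x n) \<in> W) \<and> (\<exists>s\<ge>0. P s (x n) \<notin> W)"
    by blast
  then have xN0: "\<forall>n. x n \<in> N0"
    and xW: "\<forall>n. \<forall>s\<in>{0..real (n + nat \<lceil>tau\<rceil> + 2)}. P s (x n) \<in> W"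
    and xout: "\<forall>n. \<exists>s\<ge>0. P s (x n) \<notin> W"
    by auto
  define Z where "Z n = {s. 0 \<le> s \<and> P s (x n) \<notin> W}" for n
  define e where "e n = Inf (Z n)" for n
  have Zcl: "closed (Z n)" for n
    unfolding closed_sequential_limits
  proof (intro allI impI)
    fix f l assume fl: "(\<forall>k. f k \<in> Z n) \<and> f \<longlonglongrightarrow> l"
    have f0: "0 \<le> f k" for k using fl unfolding Z_def by blast
    have l0: "0 \<le> l" by (rule LIMSEQ_le_const[of f l 0]) (use fl f0 in auto)
    have xt: "x n \<in> topspace X" "T (x n) = \<infinity>" using xN0 N0top TN0 by auto
    have "limitin X (\<lambda>k. P (f k) (x n)) (P l (x n)) sequentially"
    proof (rule flow_lim[of "\<lambda>k. x n"])
      show "limitin X (\<lambda>k. x n) (x n) sequentially" using xt by simp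
      show "f \<longlonglongrightarrow> l" using fl by blast
      show "0 \<le> l" by (rule l0)
      show "T (x n) = \<infinity>" by (rule xt(2))
      show "\<forall>\<^sub>F k in sequentially. 0 \<le> f k \<and> T (x n) = \<infinity> \<and> x n \<in> topspace X"
        apply (rule always_eventually) using f0 xt by blast
    qed
    moreover have "closedin X (topspace X - W)" using W(1) by blast
    moreover have "eventually (\<lambda>k. P (f k) (x n) \<in> topspace X - W) sequentially"
    proof (rule always_eventually, rule allI)
      fix k
      have "P (f k) (x n) \<in> topspace X" using N0semi[of "x n" 0 "f k"] xN0 f0 by blast
      then show "P (f k) (x n) \<in> topspace X - W" using fl unfolding Z_def by blast
    qed
    ultimately have "P l (x n) \<in> topspace X - W" using limitin_closedin by fastforce
    then show "l \<in> Z n" unfolding Z_def using l0 by simp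
  qed
  have bdd: "bdd_below (Z n)" for n unfolding Z_def by (rule bdd_belowI[of _ 0]) auto
  have eZ: "e n \<in> Z n" for n
    unfolding e_def using closed_contains_Inf[OF _ bdd Zcl] xout unfolding Z_def by blast
  have elow: "e n \<le> s" if "s \<in> Z n" for n s unfolding e_def using cInf_lower[OF that bdd] .
  have ebig: "real n + tau + 1 \<le> e n" for n
  proof (rule ccontr)
    assume "\<not> ?thesis"
    moreover have "tau \<le> real (nat \<lceil>tau\<rceil>)" by linarith
    moreover have "0 \<le> e n" using eZ[of n] unfolding Z_def by blast
    ultimately have "e n \<in> {0..real (n + nat \<lceil>tau\<rceil> + 2)}" by simp
    then show False using xW eZ[of n] unfolding Z_def by blast
  qed
  have inW: "\<forall>n s. 0 \<le> s \<and> s < e n \<longrightarrow> P s (x n) \<in> W"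
  proof (intro allI impI)
    fix n s assume h: "0 \<le> s \<and> s < e n"
    show "P s (x n) \<in> W"
    proof (rule ccontr)
      assume "P s (x n) \<notin> W"
      then have "s \<in> Z n" using h unfolding Z_def by blast
      then show False using elow h by fastforce
    qed
  qed
  have B: "closedin X (topspace X - W)" using W(1) by blast
  have eB: "\<forall>n. P (e n) (x n) \<in> topspace X - W"
  proof
    fix n
    have "0 \<le> e n" "P (e n) (x n) \<notin> W" using eZ[of n] unfolding Z_def by auto
    then show "P (e n) (x n) \<in> topspace X - W" using N0semi[of "x n" 0 "e n"] xN0 by blast
  qed
  obtain v where vAA: "\<forall>m. v m \<in> AA" and v1: "\<forall>m. P 1 (v (Suc m)) = v m"
    and vW: "\<forall>a b. 0 \<le> a \<and> a < real b \<longrightarrow> P a (v b) \<in> X closure_of W" and v0: "v 0 \<in> topspace X - W"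
    using limtraj[OF xN0 _ inW B eB] ebig by blast
  have cw: "closedin X (X closure_of W)" by simp
  have dj: "disjnt (X closure_of W) R" using W(3) disjnt_sym by blast
  have "v 0 \<in> W \<inter> AA" by (rule dich[OF cw dj vAA v1 vW relnbhd[OF W(1) W(2) AsubAA]])
  then show False using v0 by blast
qed

definition "Sst = (SOME S::nat. \<forall>x\<in>N0. (\<forall>s\<in>{0..real S}. P s x \<in> W) \<longrightarrow> (\<forall>s\<ge>0. P s x \<in> W))"
definition "NN = {x \<in> X interior_of N0. \<forall>s\<in>{0..real Sst}. P s x \<in> W}"

lemma Sst: "\<forall>x\<in>N0. (\<forall>s\<in>{0..real Sst}. P s x \<in> W) \<longrightarrow> (\<forall>s\<ge>0. P s x \<in> W)"
  unfolding Sst_def by (rule someI_ex[OF stab])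

lemma NN_N0: "NN \<subseteq> N0" unfolding NN_def using interior_of_subset[of X N0] by blast

lemma NN_stab: "x \<in> NN \<Longrightarrow> 0 \<le> s \<Longrightarrow> P s x \<in> W"
  using Sst NN_N0 unfolding NN_def by blast

lemma NN_W: "NN \<subseteq> W"
proof
  fix x assume x: "x \<in> NN"
  then have "P 0 x = x" using P0 NN_N0 N0top by blast
  then show "x \<in> W" using NN_stab[OF x, of 0] by simp
qed

lemma NN_nbhd: "sf_nbhd X A NN"
proof -
  define Y where "Y = subtopology euclideanreal {0..real Sst}"
  define I0 where "I0 = X interior_of N0"
  define g where "g = (\<lambda>z::real \<times> 'a. P (fst z) (snd z))"
  have cY: "compact_space Y" unfolding Y_def by (rule compact_space_subtopology) simp
  have tY: "topspace Y = {0..real Sst}" unfolding Y_def by simp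
  have I0N0: "I0 \<subseteq> N0" unfolding I0_def by (rule interior_of_subset)
  have cg: "continuous_map (prod_topology Y (subtopology X I0)) X g"
  proof -
    have "prod_topology Y (subtopology X I0) = subtopology (prod_topology euclideanreal X) ({0..real Sst} \<times> I0)"
      unfolding Y_def by (simp add: subtopology_Times)
    moreover have "{0..real Sst} \<times> I0 \<subseteq> sf_domain X T"
      using I0N0 N0top TN0 by (auto simp: sf_domain_def)
    ultimately show ?thesis
      unfolding g_def using continuous_map_from_subtopology_mono[OF cont] by metis
  qed
  define Os where "Os = {z \<in> topspace (prod_topology Y (subtopology X I0)). g z \<in> W}"
  have "openin (prod_topology Y (subtopology X I0)) Os"
    unfolding Os_def by (rule openin_continuous_map_preimage[OF cg W(1)])
  moreover have "prod_topology Y (subtopology X I0) = subtopology (prod_topology Y X) (topspace Y \<times> I0)"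
    by (simp add: prod_topology_subtopology(2))
  moreover have "openin (prod_topology Y X) (topspace Y \<times> I0)"
    unfolding I0_def by (simp add: openin_prod_Times_iff)
  ultimately have Oso: "openin (prod_topology Y X) Os" using openin_trans_full by metis
  define Cs where "Cs = topspace (prod_topology Y X) - Os"
  have "closedin (prod_topology Y X) Cs" unfolding Cs_def using Oso by blast
  then have sC: "closedin X (snd ` Cs)" using closed_map_snd[OF cY] unfolding closed_map_def by blast
  define N' where "N' = topspace X - snd ` Cs"
  have N'o: "openin X N'" unfolding N'_def using sC by blast
  have N'N: "N' \<subseteq> NN"
  proof
    fix x assume x: "x \<in> N'"
    then have xt: "x \<in> topspace X" "x \<notin> snd ` Cs" unfolding N'_def by auto
    have inO: "(s, x) \<in> Os" if "s \<in> {0..real Sst}" for s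
    proof -
      have "(s, x) \<in> topspace (prod_topology Y X)" using that xt tY by simp
      moreover have "(s, x) \<notin> Cs" using xt(2) by force
      ultimately show ?thesis unfolding Cs_def by blast
    qed
    have "x \<in> I0" using inO[of 0] unfolding Os_def by simp
    moreover have "P s x \<in> W" if "s \<in> {0..real Sst}" for s
      using inO[OF that] unfolding Os_def g_def by simp
    ultimately show "x \<in> NN" unfolding NN_def I0_def by blast
  qed
  have clN': "X closure_of A \<subseteq> N'"
  proof
    fix a assume a: "a \<in> X closure_of A"
    have at: "a \<in> topspace X" using a closure_of_subset_topspace[of X A] by blast
    have aI0: "a \<in> I0" using a clA_I0 unfolding I0_def by blast
    have "a \<notin> snd ` Cs"
    proof
      assume "a \<in> snd ` Cs"
      then obtain s where sC: "(s, a) \<in> Cs" by force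
      then have s: "s \<in> {0..real Sst}" unfolding Cs_def using tY by simp
      have "P s a \<in> X closure_of A"
        using clos_fw[OF Atop clA_K _, of s] Afw s a by auto
      then have "P s a \<in> W" using W(2) by blast
      moreover have "(s, a) \<in> topspace (prod_topology Y (subtopology X I0))"
        using s tY at aI0 by simp
      ultimately have "(s, a) \<in> Os" unfolding Os_def g_def by simp
      then show False using sC unfolding Cs_def by blast
    qed
    then show "a \<in> N'" unfolding N'_def using at by blast
  qed
  have "N' \<subseteq> X interior_of NN" by (rule interior_of_maximal[OF N'N N'o])
  moreover have "NN \<subseteq> topspace X" using NN_N0 N0top by blast
  ultimately show ?thesis unfolding sf_nbhd_def using clN' by blast
qed

lemma NN_att: "sf_attracts X T P A NN"
  unfolding sf_attracts_def
proof (intro conjI ballI allI impI)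
  show "T x = \<infinity>" if "x \<in> NN" for x using that NN_N0 TN0 by blast
  fix V' assume V': "sf_nbhd X A V'"
  define G where "G = X interior_of V'"
  have Go: "openin X G" unfolding G_def by simp
  have clG: "X closure_of A \<subseteq> G" using V' unfolding G_def sf_nbhd_def by blast
  have GV: "G \<subseteq> V'" unfolding G_def by (rule interior_of_subset)
  show "\<exists>t0>0. \<forall>t>t0. P t ` NN \<subseteq> V'"
  proof (rule ccontr)
    assume neg: "\<not> ?thesis"
    have "\<exists>t x. t > real n + tau + 1 \<and> x \<in> NN \<and> P t x \<notin> V'" for n :: nat
    proof -
      have "real n + tau + 1 > 0" using tau(1) by simp
      then have "\<not> (\<forall>t>real n + tau + 1. P t ` NN \<subseteq> V')" using neg by blast
      then show ?thesis by blast
    qed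
    then have "\<forall>n. \<exists>tx. fst tx > real n + tau + 1 \<and> snd tx \<in> NN \<and> P (fst tx) (snd tx) \<notin> V'"
      by (metis fst_conv snd_conv)
    from choice[OF this] obtain tx where
      tx: "\<forall>n. fst (tx n) > real n + tau + 1 \<and> snd (tx n) \<in> NN \<and> P (fst (tx n)) (snd (tx n)) \<notin> V'"
      by blast
    define e where "e n = fst (tx n)" for n
    define x where "x n = snd (tx n)" for n
    have xNN: "\<forall>n. x n \<in> NN" using tx unfolding x_def by blast
    have xN0: "\<forall>n. x n \<in> N0" using xNN NN_N0 by blast
    have e: "\<forall>n. real n + tau + 1 \<le> e n" using tx unfolding e_def by (simp add: less_imp_le)
    have inW: "\<forall>n s. 0 \<le> s \<and> s < e n \<longrightarrow> P s (x n) \<in> W" using NN_stab xNN by blast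
    have B: "closedin X (topspace X - G)" using Go by blast
    have eB: "\<forall>n. P (e n) (x n) \<in> topspace X - G"
    proof
      fix n
      have "0 \<le> e n" using e[rule_format, of n] tau(1) by linarith
      then have "P (e n) (x n) \<in> topspace X" using N0semi[of "x n" 0 "e n"] xN0 by blast
      moreover have "P (e n) (x n) \<notin> V'" using tx unfolding e_def x_def by blast
      ultimately show "P (e n) (x n) \<in> topspace X - G" using GV by blast
    qed
    obtain v where vAA: "\<forall>m. v m \<in> AA" and v1: "\<forall>m. P 1 (v (Suc m)) = v m"
      and vW: "\<forall>a b. 0 \<le> a \<and> a < real b \<longrightarrow> P a (v b) \<in> X closure_of W" and v0: "v 0 \<in> topspace X - G"
      using limtraj[OF xN0 e inW B eB] by blast
    have cw: "closedin X (X closure_of W)" by simp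
    have dj: "disjnt (X closure_of W) R" using W(3) disjnt_sym by blast
    have "v 0 \<in> G \<inter> AA" by (rule dich[OF cw dj vAA v1 vW relnbhd[OF Go clG AsubAA]])
    then show False using v0 by blast
  qed
qed

lemma NN_max: "\<forall>M. sf_scompact X M \<and> sf_invariant X T P M \<and> M \<subseteq> NN \<longrightarrow> M \<subseteq> A"
proof (intro allI impI)
  fix M assume h: "sf_scompact X M \<and> sf_invariant X T P M \<and> M \<subseteq> NN"
  then have Mc: "sf_scompact X M" and Mi: "sf_invariant X T P M" and MN: "M \<subseteq> NN" by auto
  have MAA: "M \<subseteq> AA" using AAmax Mc Mi MN NN_N0 by blast
  have Mfw: "0 \<le> s \<Longrightarrow> P s ` M = M" for s using Mi unfolding sf_invariant_def by blast
  have MNA: "M \<subseteq> NA"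
  proof
    fix y assume y: "y \<in> M"
    have pre: "\<forall>z\<in>M. \<exists>z'\<in>M. P 1 z' = z" using Mfw[of 1] by force
    define pr where "pr z = (SOME z'. z' \<in> M \<and> P 1 z' = z)" for z
    have prM: "pr z \<in> M \<and> P 1 (pr z) = z" if "z \<in> M" for z
    proof -
      from pre that obtain z' where "z' \<in> M" "P 1 z' = z" by blast
      then have "\<exists>z'. z' \<in> M \<and> P 1 z' = z" by blast
      then show ?thesis unfolding pr_def by (rule someI_ex)
    qed
    define v where "v = rec_nat y (\<lambda>_ z. pr z)"
    have vM: "v m \<in> M" for m
      by (induction m) (use y prM in \<open>auto simp: v_def\<close>)
    have v1: "\<forall>m. P 1 (v (Suc m)) = v m" using prM vM by (simp add: v_def)
    have vAA: "\<forall>m. v m \<in> AA" using vM MAA by blast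
    have vW: "\<forall>a b. 0 \<le> a \<and> a < real b \<longrightarrow> P a (v b) \<in> X closure_of W"
    proof (intro allI impI)
      fix a :: real and b assume "0 \<le> a \<and> a < real b"
      then have "P a (v b) \<in> M" using Mfw vM by blast
      then have "P a (v b) \<in> W" using MN NN_W by blast
      then show "P a (v b) \<in> X closure_of W" using closure_of_subset[OF openin_subset[OF W(1)]] by blast
    qed
    have cw: "closedin X (X closure_of W)" by simp
    have dj: "disjnt (X closure_of W) R" using W(3) disjnt_sym by blast
    have "v 0 \<in> NA" by (rule dich[OF cw dj vAA v1 vW NAnb])
    then show "y \<in> NA" by (simp add: v_def)
  qed
  have Mtop: "M \<subseteq> topspace X" using Mi unfolding sf_invariant_def by blast
  have "sf_scompact (subtopology X AA) M"
    unfolding sf_scompact_def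
  proof (intro conjI allI impI)
    show "M \<subseteq> topspace (subtopology X AA)" using Mtop MAA by simp
    fix z :: "nat \<Rightarrow> 'a" assume z: "\<forall>n. z n \<in> M"
    then obtain r y where "strict_mono r" "y \<in> M" "limitin X (z \<circ> r) y sequentially"
      using Mc unfolding sf_scompact_def by blast
    moreover have "eventually (\<lambda>n. (z \<circ> r) n \<in> AA) sequentially" using z MAA by (simp add: subset_iff)
    ultimately show "\<exists>r y. strict_mono r \<and> y \<in> M \<and> limitin (subtopology X AA) (z \<circ> r) y sequentially"
      using MAA by (auto simp: limitin_subtopology)
  qed
  moreover have "sf_invariant (subtopology X AA) T P M"
    using Mi MAA unfolding sf_invariant_def by auto
  ultimately show "M \<subseteq> A" using NAmax MNA by blast
qed

lemma A_attractor: "A \<noteq> {} \<Longrightarrow> sf_attractor X T P A"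
proof -
  assume ne: "A \<noteq> {}"
  have "sf_scompact X A"
    unfolding sf_scompact_def
  proof (intro conjI allI impI)
    show "A \<subseteq> topspace X" by (rule Atop)
    fix z :: "nat \<Rightarrow> 'a" assume "\<forall>n. z n \<in> A"
    then obtain r y where "strict_mono r" "y \<in> A" "limitin (subtopology X AA) (z \<circ> r) y sequentially"
      using Ascomp unfolding sf_scompact_def by blast
    then show "\<exists>r y. strict_mono r \<and> y \<in> A \<and> limitin X (z \<circ> r) y sequentially"
      by (auto simp: limitin_subtopology)
  qed
  moreover have "sf_invariant X T P A" using Ainv Atop unfolding sf_invariant_def by auto
  ultimately show ?thesis unfolding sf_attractor_def using ne NN_nbhd NN_att NN_max by blast
qed

end

theorem theorem6p1:
  fixes X :: "'a topology" and T :: "'a \<Rightarrow> ereal" and Phi :: "real \<Rightarrow> 'a \<Rightarrow> 'a"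
    and AA N1 A :: "'a set"
  assumes "Hausdorff_space X" and "normal_space X"
    and "local_semiflow X T Phi"
    and "sf_attractor X T Phi AA"
    and "sf_nbhd X AA N1" and "sf_admissible X T Phi N1"
    and "sf_attractor (subtopology X AA) T Phi A"
  shows "sf_attractor X T Phi A"
proof -
  note H = assms(1) and nor = assms(2) and lsf = assms(3) and AAatt = assms(4)
    and nb1 = assms(5) and adm = assms(6) and Aatt = assms(7)
  obtain N0 where N0nb: "sf_nbhd X AA N0" and N0att: "sf_attracts X T Phi AA N0"
    and AAmax: "\<forall>M. sf_scompact X M \<and> sf_invariant X T Phi M \<and> M \<subseteq> N0 \<longrightarrow> M \<subseteq> AA"
    using AAatt unfolding sf_attractor_def by blast
  have AAinv: "sf_invariant X T Phi AA" using AAatt unfolding sf_attractor_def by blast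
  have ne: "A \<noteq> {}" and Ascomp: "sf_scompact (subtopology X AA) A"
    and Ainv: "sf_invariant (subtopology X AA) T Phi A"
    using Aatt unfolding sf_attractor_def by blast+
  obtain NA where NAnb: "sf_nbhd (subtopology X AA) A NA"
    and NAatt: "sf_attracts (subtopology X AA) T Phi A NA"
    and NAmax: "\<forall>M. sf_scompact (subtopology X AA) M \<and> sf_invariant (subtopology X AA) T Phi M \<and> M \<subseteq> NA \<longrightarrow> M \<subseteq> A"
    using Aatt unfolding sf_attractor_def by blast
  have AsubAA: "A \<subseteq> AA" using Ainv unfolding sf_invariant_def by auto
  have clAA: "X closure_of AA \<subseteq> X interior_of N0 \<inter> X interior_of N1"
    using N0nb nb1 unfolding sf_nbhd_def by blast
  obtain V where Vo: "openin X V" and clAAV: "X closure_of AA \<subseteq> V"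
    and clV: "X closure_of V \<subseteq> X interior_of N0 \<inter> X interior_of N1"
    using nor[unfolded normal_space_alt] clAA by (meson closedin_closure_of openin_Int openin_interior_of)
  define K where "K = X closure_of V"
  have Vnb: "sf_nbhd X AA V"
    unfolding sf_nbhd_def using Vo clAAV by (simp add: interior_of_openin openin_subset)
  obtain tau where tau: "0 < tau" "\<forall>t>tau. Phi t ` N0 \<subseteq> V"
    using N0att Vnb unfolding sf_attracts_def by blast
  have N0top: "N0 \<subseteq> topspace X" using N0nb unfolding sf_nbhd_def by blast
  have KN0: "K \<subseteq> N0" using clV interior_of_subset[of X N0] unfolding K_def by blast
  have KN1: "K \<subseteq> N1" using clV interior_of_subset[of X N1] unfolding K_def by blast
  have Kint: "K \<subseteq> X interior_of N0" using clV unfolding K_def by blast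
  have TK: "\<forall>x\<in>K. T x = \<infinity>" using KN0 N0att unfolding sf_attracts_def by blast
  have "mainloc X T Phi N0 N1 K AA A NA V tau"
    unfolding mainloc_def mainloc_axioms_def att_def att_axioms_def sfl_def
    using H lsf KN0 KN1 TK adm nor AAinv AAmax N0att N0top Vo clAAV Kint tau AsubAA Ainv Ascomp
      NAnb NAatt NAmax
    by (simp add: K_def)
  then show ?thesis using mainloc.A_attractor ne by blast
qed

end
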